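(* Let $\mathcal X$ and $\mathcal Y$ be measurable spaces, let $\Theta$ be a parameter set, and let $L(\theta;y,x)$ be a real-valued loss on $\Theta\times\mathcal Y\times\mathcal X$. Let $\theta(\cdot)$ be the regression functional $\theta(P)=\mathrm{argmin}_{\theta\in\Theta}\,E_P[L(\theta;Y,X)]$ (assumed to exist uniquely for the joint distributions on which it is evaluated). Fix a Markov kernel $P_{Y|X}$. If there is $\theta_0\in\Theta$ that minimizes $\theta\mapsto E[L(\theta;Y,x)\mid X=x]=\int L(\theta;y,x)\,P_{Y|X=x}(dy)$ for every $x\in\mathcal X$, then $\theta(\cdot)$ is well-specified for $P_{Y|X}$, and moreover $\theta(P_{Y|X}\otimes P_X)=\theta_0$ for every acceptable regressor distribution $P_X$.
   Context: A joint distribution $P$ of $(Y,X)$ on $\mathcal Y\times\mathcal X$ is written $P=P_{Y|X}\otimes P_X$, meaning $P(dy,dx)=P_{Y|X=x}(dy)\,P_X(dx)$, where $P_X$ is the marginal distribution of the regressor $X$ and $P_{Y|X}: x\mapsto P_{Y|X=x}$ is a Markov kernel (a regular conditional distribution defined for every $x$). A regression functional assigns a value $\theta(P)\in\Theta$ to joint distributions $P$ in a class $\mathcal P$. There is a designated set of "acceptable" regressor distributions (those for which the functional is identifiable/defined); $P_{Y|X}\otimes P_X\in\mathcal P$ for every acceptable $P_X$, and the set of acceptable distributions is closed under mixing: if $P_X$ is acceptable and $P_X'$ is any distribution on $\mathcal X$, then $\alpha P_X+(1-\alpha)P_X'$ is acceptable for $0<\alpha\le 1$. The functional $\theta$ is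 called well-specified for $P_{Y|X}$ if $\theta(P_{Y|X}\otimes P_X)=\theta(P_{Y|X}\otimes P_X')$ for all acceptable regressor distributions $P_X,P_X'$. All expectations are assumed to exist. *)

theory Defs
  imports "HOL-Probability.Probability"
begin

text \<open>Joint distribution P = P_{Y|X} (x) P_X of (Y,X) on Y x X, built from the
  Markov kernel K (x maps to P_{Y|X=x}) and the regressor distribution PX.\<close>
definition joint_dist :: "'y measure \<Rightarrow> 'x measure \<Rightarrow> ('x \<Rightarrow> 'y measure) \<Rightarrow> 'x measure
    \<Rightarrow> ('y \<times> 'x) measure" where
  "joint_dist MY MX K PX = PX \<bind> (\<lambda>x. distr (K x) (MY \<Otimes>\<^sub>M MX) (\<lambda>y. (y, x)))"

definition risk :: "('t \<Rightarrow> 'y \<Rightarrow> 'x \<Rightarrow> real) \<Rightarrow> ('y \<times> 'x) measure \<Rightarrow> 't \<Rightarrow> real" where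
  "risk L P t = (\<integral>z. L t (fst z) (snd z) \<partial>P)"

definition argmin_functional :: "('t \<Rightarrow> 'y \<Rightarrow> 'x \<Rightarrow> real) \<Rightarrow> 't set \<Rightarrow> ('y \<times> 'x) measure \<Rightarrow> 't" where
  "argmin_functional L Theta P = (THE t. t \<in> Theta \<and> (\<forall>t'\<in>Theta. risk L P t \<le> risk L P t'))"

definition mix_measure :: "'a measure \<Rightarrow> real \<Rightarrow> 'a measure \<Rightarrow> 'a measure \<Rightarrow> 'a measure" where
  "mix_measure M \<alpha> P P' = measure_of (space M) (sets M)
     (\<lambda>A. ennreal \<alpha> * emeasure P A + ennreal (1 - \<alpha>) * emeasure P' A)"

definition well_specified :: "(('y \<times> 'x) measure \<Rightarrow> 't) \<Rightarrow> 'y measure \<Rightarrow> 'x measure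
    \<Rightarrow> 'x measure set \<Rightarrow> ('x \<Rightarrow> 'y measure) \<Rightarrow> bool" where
  "well_specified \<theta> MY MX Acc K \<longleftrightarrow>
     (\<forall>PX\<in>Acc. \<forall>PX'\<in>Acc. \<theta> (joint_dist MY MX K PX) = \<theta> (joint_dist MY MX K PX'))"

end

theory Submission
  imports Defs
begin

lemma integral_bind_real:
  fixes f :: "'b \<Rightarrow> real"
  assumes N[measurable]: "N \<in> measurable M (subprob_algebra B)"
    and fB[measurable]: "f \<in> borel_measurable B"
    and fi: "integrable (M \<bind> N) f"
  shows "integral\<^sup>L (M \<bind> N) f = (\<integral>x. integral\<^sup>L (N x) f \<partial>M)"
proof -
  define P where "P x = (\<integral>\<^sup>+y. ennreal (f y) \<partial>N x)" for x
  define Q where "Q x = (\<integral>\<^sup>+y. ennreal (- f y) \<partial>N x)" for x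
  have Pm[measurable]: "P \<in> borel_measurable M" unfolding P_def
    by (rule measurable_compose[OF N nn_integral_measurable_subprob_algebra]) simp
  have Qm[measurable]: "Q \<in> borel_measurable M" unfolding Q_def
    by (rule measurable_compose[OF N nn_integral_measurable_subprob_algebra]) simp
  have iP: "(\<integral>\<^sup>+x. ennreal (f x) \<partial>(M \<bind> N)) = (\<integral>\<^sup>+x. P x \<partial>M)"
    unfolding P_def by (rule nn_integral_bind[OF _ N]) simp
  have iQ: "(\<integral>\<^sup>+x. ennreal (- f x) \<partial>(M \<bind> N)) = (\<integral>\<^sup>+x. Q x \<partial>M)"
    unfolding Q_def by (rule nn_integral_bind[OF _ N]) simp
  have nf: "(\<integral>\<^sup>+x. ennreal (norm (f x)) \<partial>(M \<bind> N)) < \<infinity>"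
    using fi by (simp add: integrable_iff_bounded)
  have fP: "(\<integral>\<^sup>+x. P x \<partial>M) < \<infinity>"
  proof -
    have "(\<integral>\<^sup>+x. ennreal (f x) \<partial>(M \<bind> N)) \<le> (\<integral>\<^sup>+x. ennreal (norm (f x)) \<partial>(M \<bind> N))"
      by (intro nn_integral_mono) (simp add: ennreal_leI)
    then show ?thesis using nf iP by simp
  qed
  have fQ: "(\<integral>\<^sup>+x. Q x \<partial>M) < \<infinity>"
  proof -
    have "(\<integral>\<^sup>+x. ennreal (- f x) \<partial>(M \<bind> N)) \<le> (\<integral>\<^sup>+x. ennreal (norm (f x)) \<partial>(M \<bind> N))"
      by (intro nn_integral_mono) (simp add: ennreal_leI)
    then show ?thesis using nf iQ by simp
  qed
  have aeP: "AE x in M. P x \<noteq> \<infinity>" by (rule nn_integral_PInf_AE) (use fP in auto)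
  have aeQ: "AE x in M. Q x \<noteq> \<infinity>" by (rule nn_integral_PInf_AE) (use fQ in auto)
  have inner: "AE x in M. integral\<^sup>L (N x) f = enn2real (P x) - enn2real (Q x)"
    using AE_space aeP aeQ
  proof (eventually_elim)
    case (elim x)
    have sx: "sets (N x) = sets B"
      using measurable_space[OF N elim(1)] by (simp add: space_subprob_algebra)
    have fx: "f \<in> borel_measurable (N x)" using fB sx by (simp cong: measurable_cong_sets)
    have ix: "integrable (N x) f" unfolding real_integrable_def
      using fx elim by (simp add: P_def Q_def less_top)
    show ?case using real_lebesgue_integral_def[OF ix] by (simp add: P_def Q_def)
  qed
  have eP: "integrable M (\<lambda>x. enn2real (P x)) \<and> integral\<^sup>L M (\<lambda>x. enn2real (P x)) = enn2real (\<integral>\<^sup>+x. P x \<partial>M)"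
  proof -
    have eq: "(\<integral>\<^sup>+x. ennreal (enn2real (P x)) \<partial>M) = (\<integral>\<^sup>+x. P x \<partial>M)"
      by (rule nn_integral_cong_AE) (use aeP in \<open>auto simp: less_top\<close>)
    have "integrable M (\<lambda>x. enn2real (P x))"
      by (rule integrableI_nonneg) (use eq fP in auto)
    moreover have "integral\<^sup>L M (\<lambda>x. enn2real (P x)) = enn2real (\<integral>\<^sup>+x. P x \<partial>M)"
      by (subst integral_eq_nn_integral) (use eq in auto)
    ultimately show ?thesis by simp
  qed
  have eQ: "integrable M (\<lambda>x. enn2real (Q x)) \<and> integral\<^sup>L M (\<lambda>x. enn2real (Q x)) = enn2real (\<integral>\<^sup>+x. Q x \<partial>M)"
  proof -
    have eq: "(\<integral>\<^sup>+x. ennreal (enn2real (Q x)) \<partial>M) = (\<integral>\<^sup>+x. Q x \<partial>M)"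
      by (rule nn_integral_cong_AE) (use aeQ in \<open>auto simp: less_top\<close>)
    have "integrable M (\<lambda>x. enn2real (Q x))"
      by (rule integrableI_nonneg) (use eq fQ in auto)
    moreover have "integral\<^sup>L M (\<lambda>x. enn2real (Q x)) = enn2real (\<integral>\<^sup>+x. Q x \<partial>M)"
      by (subst integral_eq_nn_integral) (use eq in auto)
    ultimately show ?thesis by simp
  qed
  have "(\<integral>x. integral\<^sup>L (N x) f \<partial>M) = (\<integral>x. enn2real (P x) - enn2real (Q x) \<partial>M)"
    by (rule integral_cong_AE) (use inner in auto)
  also have "\<dots> = enn2real (\<integral>\<^sup>+x. P x \<partial>M) - enn2real (\<integral>\<^sup>+x. Q x \<partial>M)"
    using eP eQ by (simp add: integral_diff)
  also have "\<dots> = integral\<^sup>L (M \<bind> N) f"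
    using real_lebesgue_integral_def[OF fi] iP iQ by simp
  finally show ?thesis by simp
qed
theorem lemma3p3p1:
  fixes MX :: "'x measure" and MY :: "'y measure"
    and Theta :: "'t set" and L :: "'t \<Rightarrow> 'y \<Rightarrow> 'x \<Rightarrow> real"
    and K :: "'x \<Rightarrow> 'y measure" and Acc :: "'x measure set" and \<theta>0 :: 't
  assumes kernel_prob: "\<And>x. x \<in> space MX \<Longrightarrow> prob_space (K x)"
    and kernel_sets: "\<And>x. x \<in> space MX \<Longrightarrow> sets (K x) = sets MY"
    and kernel_meas: "K \<in> MX \<rightarrow>\<^sub>M subprob_algebra MY"
    and acc_prob: "\<And>PX. PX \<in> Acc \<Longrightarrow> prob_space PX"
    and acc_sets: "\<And>PX. PX \<in> Acc \<Longrightarrow> sets PX = sets MX"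
    and acc_mix: "\<And>PX PX' \<alpha>. PX \<in> Acc \<Longrightarrow> prob_space PX' \<Longrightarrow> sets PX' = sets MX
                   \<Longrightarrow> 0 < \<alpha> \<Longrightarrow> \<alpha> \<le> 1 \<Longrightarrow> mix_measure MX \<alpha> PX PX' \<in> Acc"
    and argmin_unique: "\<And>PX. PX \<in> Acc \<Longrightarrow>
          \<exists>!t. t \<in> Theta \<and> (\<forall>t'\<in>Theta. risk L (joint_dist MY MX K PX) t \<le> risk L (joint_dist MY MX K PX) t')"
    and integrable_joint: "\<And>PX t. PX \<in> Acc \<Longrightarrow> t \<in> Theta \<Longrightarrow>
          integrable (joint_dist MY MX K PX) (\<lambda>z. L t (fst z) (snd z))"
    and integrable_cond: "\<And>x t. x \<in> space MX \<Longrightarrow> t \<in> Theta \<Longrightarrow> integrable (K x) (\<lambda>y. L t y x)"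
    and \<theta>0_in: "\<theta>0 \<in> Theta"
    and \<theta>0_min: "\<And>x t. x \<in> space MX \<Longrightarrow> t \<in> Theta \<Longrightarrow>
          (\<integral>y. L \<theta>0 y x \<partial>K x) \<le> (\<integral>y. L t y x \<partial>K x)"
  shows "well_specified (argmin_functional L Theta) MY MX Acc K
         \<and> (\<forall>PX\<in>Acc. argmin_functional L Theta (joint_dist MY MX K PX) = \<theta>0)"
proof -
  have key: "argmin_functional L Theta (joint_dist MY MX K PX) = \<theta>0" if PX: "PX \<in> Acc" for PX
  proof -
    interpret PX: prob_space PX using acc_prob[OF PX] .
    have spPX: "space PX = space MX" using acc_sets[OF PX] by (rule sets_eq_imp_space_eq)
    define N where "N x = distr (K x) (MY \<Otimes>\<^sub>M MX) (\<lambda>y. (y, x))" for x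
    have sw: "(\<lambda>(x, y). (y, x)) \<in> MX \<Otimes>\<^sub>M MY \<rightarrow>\<^sub>M MY \<Otimes>\<^sub>M MX" by measurable
    have Nm0: "N \<in> MX \<rightarrow>\<^sub>M subprob_algebra (MY \<Otimes>\<^sub>M MX)"
      unfolding N_def by (rule measurable_distr2[OF _ kernel_meas]) (use sw in simp)
    have Nm: "N \<in> PX \<rightarrow>\<^sub>M subprob_algebra (MY \<Otimes>\<^sub>M MX)"
      using Nm0 acc_sets[OF PX] by (simp cong: measurable_cong_sets)
    have J: "joint_dist MY MX K PX = PX \<bind> N" unfolding joint_dist_def N_def ..
    have sJ: "sets (PX \<bind> N) = sets (MY \<Otimes>\<^sub>M MX)"
      by (rule sets_bind) (auto simp: N_def PX.not_empty)
    have Lm: "(\<lambda>z. L t (fst z) (snd z)) \<in> borel_measurable (MY \<Otimes>\<^sub>M MX)" if t: "t \<in> Theta" for t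
      using borel_measurable_integrable[OF integrable_joint[OF PX t]] sJ J
      by (simp cong: measurable_cong_sets)
    have min: "risk L (joint_dist MY MX K PX) \<theta>0 \<le> risk L (joint_dist MY MX K PX) t"
      if t: "t \<in> Theta" for t
    proof -
      define g where "g z = L t (fst z) (snd z) - L \<theta>0 (fst z) (snd z)" for z
      have gm: "g \<in> borel_measurable (MY \<Otimes>\<^sub>M MX)"
        unfolding g_def using Lm[OF t] Lm[OF \<theta>0_in] by measurable
      have gi: "integrable (PX \<bind> N) g"
        unfolding g_def using integrable_joint[OF PX t] integrable_joint[OF PX \<theta>0_in] J
        by (simp add: Bochner_Integration.integrable_diff)
      have "0 \<le> (\<integral>x. integral\<^sup>L (N x) g \<partial>PX)"
      proof (rule integral_nonneg_AE, rule AE_I2)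
        fix x assume x: "x \<in> space PX"
        then have xm: "x \<in> space MX" using spPX by simp
        have pm: "(\<lambda>y. (y, x)) \<in> K x \<rightarrow>\<^sub>M MY \<Otimes>\<^sub>M MX"
        proof -
          have "(\<lambda>y. (y, x)) \<in> MY \<rightarrow>\<^sub>M MY \<Otimes>\<^sub>M MX"
            using xm by (intro measurable_Pair measurable_ident measurable_const) auto
          then show ?thesis using kernel_sets[OF xm] by (simp cong: measurable_cong_sets)
        qed
        have "integral\<^sup>L (N x) g = (\<integral>y. g (y, x) \<partial>K x)"
          unfolding N_def by (rule integral_distr[OF pm gm])
        also have "\<dots> = (\<integral>y. L t y x \<partial>K x) - (\<integral>y. L \<theta>0 y x \<partial>K x)"
          unfolding g_def using integrable_cond[OF xm t] integrable_cond[OF xm \<theta>0_in]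
          by (simp add: Bochner_Integration.integral_diff)
        finally show "0 \<le> integral\<^sup>L (N x) g" using \<theta>0_min[OF xm t] by simp
      qed
      also have "\<dots> = integral\<^sup>L (PX \<bind> N) g"
        by (rule integral_bind_real[OF Nm gm gi, symmetric])
      also have "\<dots> = risk L (joint_dist MY MX K PX) t - risk L (joint_dist MY MX K PX) \<theta>0"
        unfolding g_def risk_def J
        using integrable_joint[OF PX t] integrable_joint[OF PX \<theta>0_in] J
        by (simp add: Bochner_Integration.integral_diff)
      finally show ?thesis by simp
    qed
    show ?thesis unfolding argmin_functional_def
      by (rule the1_equality[OF argmin_unique[OF PX]]) (use min \<theta>0_in in blast)
  qed
  show ?thesis unfolding well_specified_def using key by simp
qed

end
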